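(* If $X$ is a space such that $\mathbf{w}(X)$ and $\mathbf{aw}(X)$ are not homotopy equivalent, then $X$ is not homotopy equivalent to any first countable space.
   Context: A loop is trivial if path-homotopic to a constant loop. A sequence of loops $\alpha_n$ based at $x$ is a null-sequence if every neighborhood of $x$ contains $\alpha_n([0,1])$ for all but finitely many $n$. $\mathbf{aw}(X)=\{x\in X\mid \text{there is a null-sequence of non-trivial loops based at }x\}$. $\mathbf{w}(X)$ is the subspace of points $x$ at which $X$ is not semilocally simply connected, i.e. every neighborhood of $x$ contains a loop based at $x$ that is non-trivial in $X$. *)

theory Defs
  imports "HOL-Analysis.Analysis"
begin

definition loop_at :: "'a topology \<Rightarrow> 'a \<Rightarrow> (real \<Rightarrow> 'a) \<Rightarrow> bool" where
  "loop_at X x g \<equiv> pathin X g \<and> g 0 = x \<and> g 1 = x"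

definition trivial_loop :: "'a topology \<Rightarrow> 'a \<Rightarrow> (real \<Rightarrow> 'a) \<Rightarrow> bool" where
  "trivial_loop X x g \<equiv>
     homotopic_with (\<lambda>h. h 0 = x \<and> h 1 = x) (subtopology euclideanreal {0..1}) X g (\<lambda>_. x)"

definition nontrivial_loop :: "'a topology \<Rightarrow> 'a \<Rightarrow> (real \<Rightarrow> 'a) \<Rightarrow> bool" where
  "nontrivial_loop X x g \<equiv> loop_at X x g \<and> \<not> trivial_loop X x g"

definition null_sequence :: "'a topology \<Rightarrow> 'a \<Rightarrow> (nat \<Rightarrow> real \<Rightarrow> 'a) \<Rightarrow> bool" where
  "null_sequence X x \<alpha> \<equiv> (\<forall>n. loop_at X x (\<alpha> n)) \<and>
     (\<forall>U. openin X U \<and> x \<in> U \<longrightarrow> (\<forall>\<^sub>F n in sequentially. \<alpha> n ` {0..1} \<subseteq> U))"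

definition aw_set :: "'a topology \<Rightarrow> 'a set" where
  "aw_set X = {x \<in> topspace X. \<exists>\<alpha>. null_sequence X x \<alpha> \<and> (\<forall>n. nontrivial_loop X x (\<alpha> n))}"

definition w_set :: "'a topology \<Rightarrow> 'a set" where
  "w_set X = {x \<in> topspace X. \<forall>U. openin X U \<and> x \<in> U \<longrightarrow>
                 (\<exists>g. nontrivial_loop X x g \<and> g ` {0..1} \<subseteq> U)}"

end

theory Submission
  imports Defs
begin


lemma Q_cont:
  assumes H: "continuous_map (prod_topology (top_of_set {0..1}) X) X H"
    and G: "continuous_map (prod_topology (top_of_set {0..1}) (top_of_set {0..1})) X G"
    and \<alpha>: "pathin X \<alpha>"
    and eq: "\<And>a. a \<in> {0..1} \<Longrightarrow> H(0, \<alpha> a) = G(0, a)"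
  shows "continuous_map (top_of_set ({0..1::real}\<times>{0..2::real})) X
           (\<lambda>z. if snd z \<le> 1 then H(1 - snd z, \<alpha>(fst z)) else G(snd z - 1, fst z))"
proof (rule continuous_map_cases_le)
  show "continuous_map (top_of_set ({0..1::real}\<times>{0..2::real})) euclideanreal snd"
    by (simp add: continuous_on_snd)
  show "continuous_map (top_of_set ({0..1::real}\<times>{0..2::real})) euclideanreal (\<lambda>z. 1)"
    by simp
  have 1: "continuous_map (subtopology (top_of_set ({0..1::real}\<times>{0..2::real})) {z \<in> topspace (top_of_set ({0..1::real}\<times>{0..2::real})). snd z \<le> 1})
      (prod_topology (top_of_set {0..1}) X) (\<lambda>z. (1 - snd z, \<alpha>(fst z)))"
  proof (intro continuous_map_pairedI)
    show "continuous_map (subtopology (top_of_set ({0..1::real}\<times>{0..2::real})) {z \<in> topspace (top_of_set ({0..1::real}\<times>{0..2::real})). snd z \<le> 1})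
      (top_of_set {0..1}) (\<lambda>z. 1 - snd z)"
      by (simp add: subtopology_subtopology, intro conjI continuous_intros, auto simp: Pi_iff)
    have "continuous_map (subtopology (top_of_set ({0..1::real}\<times>{0..2::real})) {z \<in> topspace (top_of_set ({0..1::real}\<times>{0..2::real})). snd z \<le> 1})
      (top_of_set {0..1}) fst"
      by (simp add: subtopology_subtopology, intro conjI continuous_intros, auto simp: Pi_iff)
    then show "continuous_map (subtopology (top_of_set ({0..1::real}\<times>{0..2::real})) {z \<in> topspace (top_of_set ({0..1::real}\<times>{0..2::real})). snd z \<le> 1})
      X (\<lambda>z. \<alpha> (fst z))"
      using continuous_map_compose[OF _ \<alpha>[unfolded pathin_def]] by (simp add: o_def)
  qed
  show "continuous_map (subtopology (top_of_set ({0..1::real}\<times>{0..2::real})) {z \<in> topspace (top_of_set ({0..1::real}\<times>{0..2::real})). snd z \<le> 1}) X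
     (\<lambda>z. H (1 - snd z, \<alpha> (fst z)))"
    using continuous_map_compose[OF 1 H] by (simp add: o_def)
  have 2: "continuous_map (subtopology (top_of_set ({0..1::real}\<times>{0..2::real})) {z \<in> topspace (top_of_set ({0..1::real}\<times>{0..2::real})). 1 \<le> snd z})
      (top_of_set ({0..1}\<times>{0..1})) (\<lambda>z. (snd z - 1, fst z))"
    by (simp add: subtopology_subtopology, intro conjI continuous_intros, auto simp: Pi_iff)
  show "continuous_map (subtopology (top_of_set ({0..1::real}\<times>{0..2::real})) {z \<in> topspace (top_of_set ({0..1::real}\<times>{0..2::real})). 1 \<le> snd z}) X
     (\<lambda>z. G (snd z - 1, fst z))"
    using continuous_map_compose[OF 2] G by (simp add: o_def)
  show "H (1 - snd z, \<alpha> (fst z)) = G (snd z - 1, fst z)"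
    if "z \<in> topspace (top_of_set ({0..1::real}\<times>{0..2::real}))" "snd z = 1" for z
    using that eq by auto
qed




lemma conj_triv:
  fixes X :: "'a topology" and H :: "real \<times> 'a \<Rightarrow> 'a" and \<alpha> :: "real \<Rightarrow> 'a"
  assumes H: "continuous_map (prod_topology (top_of_set {0..1}) X) X H"
    and H0: "\<forall>y\<in>topspace X. H(0,y) = k y" and H1: "\<forall>y\<in>topspace X. H(1,y) = y"
    and \<alpha>: "loop_at X x \<alpha>"
    and tr: "trivial_loop X (k x) (k \<circ> \<alpha>)"
  shows "trivial_loop X x \<alpha>"
proof -
  have pa: "pathin X \<alpha>" and a0: "\<alpha> 0 = x" and a1: "\<alpha> 1 = x"
    using \<alpha> by (auto simp: loop_at_def)
  have atop: "\<alpha> s \<in> topspace X" if "s \<in> {0..1}" for s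
    using pa that unfolding pathin_def continuous_map_def by auto
  have "homotopic_with (\<lambda>h. h 0 = k x \<and> h 1 = k x) (subtopology euclideanreal {0..1}) X (k \<circ> \<alpha>) (\<lambda>_. k x)"
    using tr unfolding trivial_loop_def .
  then obtain G :: "real \<times> real \<Rightarrow> 'a" where G: "continuous_map (prod_topology (top_of_set {0..1}) (top_of_set {0..1})) X G"
    and G0: "\<forall>s\<in>{0..1}. G(0,s) = k (\<alpha> s)" and G1: "\<forall>s\<in>{0..1}. G(1,s) = k x"
    and Gt: "\<forall>t\<in>{0..1::real}. G(t,0) = k x \<and> G(t,1) = k x"
    by (subst (asm) homotopic_with) auto
  define Q where "Q = (\<lambda>z. if snd z \<le> 1 then H(1 - snd z, \<alpha>(fst z)) else G(snd z - 1, fst z))"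
  have Qc: "continuous_map (top_of_set ({0..1::real}\<times>{0..2::real})) X Q"
    unfolding Q_def
    by (rule Q_cont[OF H G pa]) (use H0 G0 atop in auto)
  have Q0: "Q(a,0) = \<alpha> a" if "a \<in> {0..1}" for a
    using that H1 atop by (simp add: Q_def)
  have Qside: "Q(1,h) = Q(0,h)" if "h \<in> {0..2}" for h
    using that Gt a0 a1 by (auto simp: Q_def)
  have Qtop: "Q(a,2) = Q(0,2)" if "a \<in> {0..1}" for a
    using that G1 by (auto simp: Q_def)
  have Qx: "Q(0,0) = x"
    using Q0[of 0] a0 by simp
  define A where "A = (\<lambda>(u::real) s::real. max 0 (min 1 ((s - u/3)/(1 - 2*u/3))))"
  define ht where "ht = (\<lambda>u s::real. 2 * min u (min (3 * s) (3*(1-s))))"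
  define P where "P = (\<lambda>h::real\<Rightarrow>'a. h 0 = x \<and> h 1 = x)"
  define \<psi> where "\<psi> = (\<lambda>s::real. Q(0, 2 * min 1 (min (3 * s) (3*(1-s)))))"
  have Ploc: "\<And>h k. (\<And>x. x \<in> topspace (top_of_set {0..1::real}) \<Longrightarrow> h x = k x) \<Longrightarrow> (P h \<longleftrightarrow> P k)"
    by (simp add: P_def)
  have step1: "homotopic_with P (top_of_set {0..1}) X \<alpha> \<psi>"
  proof (subst homotopic_with, force simp: P_def, intro exI conjI ballI)
    have c1: "continuous_map (top_of_set ({0..1::real}\<times>{0..1::real})) (top_of_set ({0..1::real}\<times>{0..2::real}))
         (\<lambda>z. (A (fst z) (snd z), ht (fst z) (snd z)))"
      unfolding A_def ht_def
      apply (simp only: continuous_map_subtopology_eu case_prod_unfold)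
      apply (intro conjI continuous_intros)
      apply (auto simp: Pi_iff)
      done
    show "continuous_map (prod_topology (top_of_set {0..1}) (top_of_set {0..1})) X
         (\<lambda>z. Q (A (fst z) (snd z), ht (fst z) (snd z)))"
      using continuous_map_compose[OF c1 Qc] by (simp add: o_def)
    show "Q (A (fst (0, s)) (snd (0, s)), ht (fst (0, s)) (snd (0, s))) = \<alpha> s"
      if "s \<in> topspace (top_of_set {0..1})" for s
    proof -
      have "A 0 s = s" "ht 0 s = 0" using that by (auto simp: A_def ht_def)
      then show ?thesis using Q0 that by simp
    qed
    show "Q (A (fst (1, s)) (snd (1, s)), ht (fst (1, s)) (snd (1, s))) = \<psi> s"
      if "s \<in> topspace (top_of_set {0..1})" for s
    proof -
      have s: "0 \<le> s" "s \<le> 1" using that by auto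
      consider "s \<le> 1/3" | "s \<ge> 2/3" | "1/3 \<le> s \<and> s \<le> 2/3" by linarith
      then show ?thesis
      proof cases
        case 1
        then have "A 1 s = 0" by (simp add: A_def)
        then show ?thesis by (simp add: ht_def \<psi>_def)
      next
        case 2
        then have "A 1 s = 1" by (simp add: A_def)
        moreover have "2 * min 1 (min (3 * s) (3*(1-s))) \<in> {0..2}" using s by auto
        ultimately show ?thesis using Qside by (simp add: ht_def \<psi>_def)
      next
        case 3
        then have "min 1 (min (3 * s) (3*(1-s))) = 1" by auto
        moreover have "A 1 s \<in> {0..1}" by (simp add: A_def)
        ultimately show ?thesis using Qtop[of "A 1 s"] by (simp add: ht_def \<psi>_def)
      qed
    qed
    show "P (\<lambda>s. Q (A (fst (t, s)) (snd (t, s)), ht (fst (t, s)) (snd (t, s))))"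
      if "t \<in> {0..1}" for t
    proof -
      have t: "0 \<le> t" "t \<le> 1" using that by auto
      have d: "1 - 2*t/3 > 0" using t by auto
      have "(0 - t/3)/(1 - 2*t/3) \<le> 0" using t d by (simp add: divide_simps)
      then have A0: "A t 0 = 0" by (simp add: A_def)
      have "(1 - t/3)/(1 - 2*t/3) \<ge> 1" using t d by (simp add: divide_simps)
      then have A1: "A t 1 = 1" by (simp add: A_def)
      note A0 A1
      moreover have "ht t 0 = 0" "ht t 1 = 0" using t by (auto simp: ht_def)
      ultimately show ?thesis using Qx Qside[of 0] by (simp add: P_def)
    qed
  qed
  have step2: "homotopic_with P (top_of_set {0..1}) X \<psi> (\<lambda>_. x)"
  proof (subst homotopic_with, force simp: P_def, intro exI conjI ballI)
    have c1: "continuous_map (top_of_set ({0..1::real}\<times>{0..1::real})) (top_of_set ({0..1::real}\<times>{0..2::real}))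
         (\<lambda>z. (0, (1 - fst z) * (2 * min 1 (min (3 * snd z) (3*(1 - snd z))))))"
      apply (simp only: continuous_map_subtopology_eu)
      apply (intro conjI continuous_intros)
      apply (auto simp: Pi_iff mult_le_one)
      done
    show "continuous_map (prod_topology (top_of_set {0..1}) (top_of_set {0..1})) X
         (\<lambda>z. Q (0, (1 - fst z) * (2 * min 1 (min (3 * snd z) (3*(1 - snd z))))))"
      using continuous_map_compose[OF c1 Qc] by (simp add: o_def)
    show "Q (0, (1 - fst (0, s)) * (2 * min 1 (min (3 * snd (0, s)) (3*(1 - snd (0, s)))))) = \<psi> s" for s
      by (simp add: \<psi>_def)
    show "Q (0, (1 - fst (1, s)) * (2 * min 1 (min (3 * snd (1, s)) (3*(1 - snd (1, s)))))) = x" for s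
      by (simp add: Qx)
    show "P (\<lambda>s. Q (0, (1 - fst (t, s)) * (2 * min 1 (min (3 * snd (t, s)) (3*(1 - snd (t, s))))))) " for t
      by (simp add: P_def Qx)
  qed
  show ?thesis
    using homotopic_with_trans[OF step1 step2] unfolding trivial_loop_def P_def a0 .
qed




lemma loop_at_compose:
  assumes "loop_at Y y \<beta>" "continuous_map Y X g"
  shows "loop_at X (g y) (g \<circ> \<beta>)"
  using assms unfolding loop_at_def pathin_def by (auto intro: continuous_map_compose)

lemma trivial_loop_compose:
  assumes "trivial_loop Y y \<beta>" "continuous_map Y X g"
  shows "trivial_loop X (g y) (g \<circ> \<beta>)"
proof -
  have "homotopic_with (\<lambda>h. h 0 = g y \<and> h 1 = g y) (subtopology euclideanreal {0..1}) X (g \<circ> \<beta>) (g \<circ> (\<lambda>_. y))"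
    using assms unfolding trivial_loop_def
    by (rule homotopic_with_compose_continuous_map_left) auto
  then show ?thesis unfolding trivial_loop_def by (simp add: o_def)
qed

lemma nontriv_map:
  fixes X :: "'a topology" and Y :: "'b topology"
  assumes f: "continuous_map X Y f" and g: "continuous_map Y X g"
    and hom: "homotopic_with (\<lambda>_. True) X X (g \<circ> f) id"
    and nt: "nontrivial_loop X x \<alpha>"
  shows "nontrivial_loop Y (f x) (f \<circ> \<alpha>)"
proof -
  have la: "loop_at X x \<alpha>" and ntr: "\<not> trivial_loop X x \<alpha>"
    using nt by (auto simp: nontrivial_loop_def)
  have "loop_at Y (f x) (f \<circ> \<alpha>)" using loop_at_compose[OF la f] .
  moreover have "\<not> trivial_loop Y (f x) (f \<circ> \<alpha>)"
  proof
    assume "trivial_loop Y (f x) (f \<circ> \<alpha>)"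
    from trivial_loop_compose[OF this g]
    have tr: "trivial_loop X ((g \<circ> f) x) ((g \<circ> f) \<circ> \<alpha>)" by (simp add: o_assoc)
    obtain H :: "real \<times> 'a \<Rightarrow> 'a" where H: "continuous_map (prod_topology (top_of_set {0..1}) X) X H"
      and H0: "\<forall>y. H(0,y) = (g \<circ> f) y" and H1: "\<forall>y. H(1,y) = id y"
      using hom unfolding homotopic_with_def by blast
    have "trivial_loop X x \<alpha>"
      by (rule conj_triv[OF H _ _ la tr]) (use H0 H1 in auto)
    with ntr show False by simp
  qed
  ultimately show ?thesis by (simp add: nontrivial_loop_def)
qed

lemma w_map:
  fixes X :: "'a topology" and Y :: "'b topology"
  assumes f: "continuous_map X Y f" and g: "continuous_map Y X g"
    and hom: "homotopic_with (\<lambda>_. True) X X (g \<circ> f) id"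
    and x: "x \<in> w_set X"
  shows "f x \<in> w_set Y"
proof -
  have xt: "x \<in> topspace X" using x by (simp add: w_set_def)
  have "\<exists>h. nontrivial_loop Y (f x) h \<and> h ` {0..1} \<subseteq> V" if V: "openin Y V" "f x \<in> V" for V
  proof -
    define U where "U = {y \<in> topspace X. f y \<in> V}"
    have "openin X U" unfolding U_def using openin_continuous_map_preimage[OF f V(1)] .
    moreover have "x \<in> U" using xt V by (simp add: U_def)
    ultimately obtain \<alpha> where a: "nontrivial_loop X x \<alpha>" "\<alpha> ` {0..1} \<subseteq> U"
      using x unfolding w_set_def by blast
    show ?thesis
      by (rule exI[of _ "f \<circ> \<alpha>"]) (use nontriv_map[OF f g hom a(1)] a(2) in \<open>auto simp: U_def\<close>)
  qed
  moreover have "f x \<in> topspace Y" using f xt unfolding continuous_map_def by blast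
  ultimately show ?thesis by (simp add: w_set_def)
qed

lemma aw_map:
  fixes X :: "'a topology" and Y :: "'b topology"
  assumes f: "continuous_map X Y f" and g: "continuous_map Y X g"
    and hom: "homotopic_with (\<lambda>_. True) X X (g \<circ> f) id"
    and x: "x \<in> aw_set X"
  shows "f x \<in> aw_set Y"
proof -
  have xt: "x \<in> topspace X" using x by (simp add: aw_set_def)
  obtain \<alpha> where ns: "null_sequence X x \<alpha>" and nt: "\<forall>n. nontrivial_loop X x (\<alpha> n)"
    using x unfolding aw_set_def by blast
  have "null_sequence Y (f x) (\<lambda>n. f \<circ> \<alpha> n)"
    unfolding null_sequence_def
  proof (intro conjI allI impI)
    show "loop_at Y (f x) (f \<circ> \<alpha> n)" for n
      using ns loop_at_compose[OF _ f] unfolding null_sequence_def by blast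
    fix V assume V: "openin Y V \<and> f x \<in> V"
    define U where "U = {y \<in> topspace X. f y \<in> V}"
    have "openin X U" unfolding U_def using openin_continuous_map_preimage[OF f] V by blast
    moreover have "x \<in> U" using xt V by (simp add: U_def)
    ultimately have "\<forall>\<^sub>F n in sequentially. \<alpha> n ` {0..1} \<subseteq> U"
      using ns unfolding null_sequence_def by blast
    then show "\<forall>\<^sub>F n in sequentially. (f \<circ> \<alpha> n) ` {0..1} \<subseteq> V"
      by (rule eventually_mono) (auto simp: U_def)
  qed
  moreover have "\<forall>n. nontrivial_loop Y (f x) (f \<circ> \<alpha> n)"
    using nontriv_map[OF f g hom] nt by blast
  moreover have "f x \<in> topspace Y" using f xt unfolding continuous_map_def by blast
  ultimately show ?thesis unfolding aw_set_def by (intro CollectI conjI exI[of _ "\<lambda>n. f \<circ> \<alpha> n"]) auto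
qed


lemma hom_id_partial:
  fixes X :: "'a topology" and H :: "real \<times> 'a \<Rightarrow> 'a"
  assumes H: "continuous_map (prod_topology (top_of_set {0..1}) X) X H"
    and H1: "\<forall>x. H(1,x) = x" and t: "t \<in> {0..1}"
  shows "continuous_map X X (\<lambda>x. H(t,x)) \<and> homotopic_with (\<lambda>_. True) X X (\<lambda>x. H(t,x)) id"
proof
  show "continuous_map X X (\<lambda>x. H(t,x))"
    using continuous_map_o_Pair[OF H, of t] t by (simp add: o_def)
  have c1: "continuous_map (top_of_set {0..1}) (top_of_set {0..1::real}) (\<lambda>s. t + s * (1 - t))"
  proof -
    have "t + s * (1 - t) \<in> {0..1}" if "s \<in> {0..1}" for s
    proof -
      have "0 \<le> s * (1 - t)" "s * (1 - t) \<le> 1 - t" using t that by (auto simp: mult_left_le_one_le)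
      then show ?thesis using t by auto
    qed
    then show ?thesis by (simp, intro conjI continuous_intros) 
  qed
  have c2: "continuous_map (prod_topology (top_of_set {0..1}) X) (prod_topology (top_of_set {0..1}) X)
      (\<lambda>z. (t + fst z * (1 - t), snd z))"
    by (intro continuous_map_pairedI continuous_map_snd) (use continuous_map_compose[OF continuous_map_fst c1] in \<open>simp add: o_def\<close>)
  show "homotopic_with (\<lambda>_. True) X X (\<lambda>x. H(t,x)) id"
    unfolding homotopic_with_def
    by (rule exI[of _ "\<lambda>z. H(t + fst z * (1 - t), snd z)"])
       (use continuous_map_compose[OF c2 H] H1 in \<open>simp add: o_def\<close>)
qed

lemma restrict_hom:
  fixes X :: "'a topology"
  assumes hom: "homotopic_with (\<lambda>_. True) X X k id"
    and pres: "\<And>h. continuous_map X X h \<Longrightarrow> homotopic_with (\<lambda>_. True) X X h id \<Longrightarrow> h ` S \<subseteq> S"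
  shows "homotopic_with (\<lambda>_. True) (subtopology X S) (subtopology X S) k id"
proof -
  obtain H :: "real \<times> 'a \<Rightarrow> 'a" where H: "continuous_map (prod_topology (top_of_set {0..1}) X) X H"
    and H0: "\<forall>y. H(0,y) = k y" and H1: "\<forall>y. H(1,y) = id y"
    using hom unfolding homotopic_with_def by blast
  have H1': "\<forall>y. H(1,y) = y" using H1 by simp
  have inS: "H(t,x) \<in> S" if "t \<in> {0..1}" "x \<in> S" for t x
    using pres[OF conjunct1[OF hom_id_partial[OF H H1' that(1)]] conjunct2[OF hom_id_partial[OF H H1' that(1)]]] that(2)
    by blast
  have "continuous_map (prod_topology (top_of_set {0..1}) (subtopology X S)) (subtopology X S) H"
  proof (rule continuous_map_into_subtopology)
    show "continuous_map (prod_topology (top_of_set {0..1}) (subtopology X S)) X H"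
      unfolding prod_topology_subtopology(2) by (rule continuous_map_from_subtopology[OF H])
    show "H \<in> topspace (prod_topology (top_of_set {0..1}) (subtopology X S)) \<rightarrow> S"
      using inS by (auto simp: Pi_iff)
  qed
  then show ?thesis unfolding homotopic_with_def using H0 H1 by blast
qed

lemma restrict_he:
  fixes X :: "'a topology" and Y :: "'b topology"
  assumes f: "continuous_map X Y f" and g: "continuous_map Y X g"
    and hom1: "homotopic_with (\<lambda>_. True) X X (g \<circ> f) id"
    and hom2: "homotopic_with (\<lambda>_. True) Y Y (f \<circ> g) id"
    and fS: "f ` S \<subseteq> T" and gT: "g ` T \<subseteq> S"
    and presX: "\<And>h. continuous_map X X h \<Longrightarrow> homotopic_with (\<lambda>_. True) X X h id \<Longrightarrow> h ` S \<subseteq> S"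
    and presY: "\<And>h. continuous_map Y Y h \<Longrightarrow> homotopic_with (\<lambda>_. True) Y Y h id \<Longrightarrow> h ` T \<subseteq> T"
  shows "subtopology X S homotopy_equivalent_space subtopology Y T"
  unfolding homotopy_equivalent_space_def
proof (intro exI conjI)
  show "continuous_map (subtopology X S) (subtopology Y T) f"
    by (rule continuous_map_into_subtopology[OF continuous_map_from_subtopology[OF f]]) (use fS in \<open>auto simp: Pi_iff\<close>)
  show "continuous_map (subtopology Y T) (subtopology X S) g"
    by (rule continuous_map_into_subtopology[OF continuous_map_from_subtopology[OF g]]) (use gT in \<open>auto simp: Pi_iff\<close>)
  show "homotopic_with (\<lambda>_. True) (subtopology X S) (subtopology X S) (g \<circ> f) id"
    by (rule restrict_hom[OF hom1 presX])
  show "homotopic_with (\<lambda>_. True) (subtopology Y T) (subtopology Y T) (f \<circ> g) id"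
    by (rule restrict_hom[OF hom2 presY])
qed

lemma w_pres:
  assumes "continuous_map X X h" "homotopic_with (\<lambda>_. True) X X h id"
  shows "h ` w_set X \<subseteq> w_set X"
  using w_map[OF assms(1) continuous_map_id] assms(2) by auto

lemma aw_pres:
  assumes "continuous_map X X h" "homotopic_with (\<lambda>_. True) X X h id"
  shows "h ` aw_set X \<subseteq> aw_set X"
  using aw_map[OF assms(1) continuous_map_id] assms(2) by auto


lemma fc_w_aw:
  fixes Y :: "'b topology"
  assumes fc: "first_countable Y"
  shows "w_set Y = aw_set Y"
proof
  show "aw_set Y \<subseteq> w_set Y"
  proof
    fix x assume x: "x \<in> aw_set Y"
    then obtain \<alpha> where ns: "null_sequence Y x \<alpha>" and nt: "\<forall>n. nontrivial_loop Y x (\<alpha> n)"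
      and xt: "x \<in> topspace Y"
      unfolding aw_set_def by blast
    have "\<exists>g. nontrivial_loop Y x g \<and> g ` {0..1} \<subseteq> U" if "openin Y U" "x \<in> U" for U
    proof -
      have "\<forall>\<^sub>F n in sequentially. \<alpha> n ` {0..1} \<subseteq> U" using ns that unfolding null_sequence_def by blast
      then obtain N where "\<forall>n\<ge>N. \<alpha> n ` {0..1} \<subseteq> U" unfolding eventually_sequentially by blast
      then show ?thesis using nt by blast
    qed
    then show "x \<in> w_set Y" using xt unfolding w_set_def by blast
  qed
  show "w_set Y \<subseteq> aw_set Y"
  proof
    fix x assume x: "x \<in> w_set Y"
    then have xt: "x \<in> topspace Y" unfolding w_set_def by blast
    from fc[unfolded first_countable_def, rule_format, OF xt]
    obtain \<B> where B: "countable \<B> \<and> (\<forall>V\<in>\<B>. openin Y V) \<and>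
      (\<forall>U. openin Y U \<and> x \<in> U \<longrightarrow> (\<exists>V\<in>\<B>. x \<in> V \<and> V \<subseteq> U))" ..
    have cB: "countable \<B>" using B by (rule conjunct1)
    have oB: "\<forall>V\<in>\<B>. openin Y V" using B[THEN conjunct2] by (rule conjunct1)
    have bB: "\<forall>U. openin Y U \<and> x \<in> U \<longrightarrow> (\<exists>V\<in>\<B>. x \<in> V \<and> V \<subseteq> U)" using B[THEN conjunct2] by (rule conjunct2)
    define \<C> where "\<C> = {V\<in>\<B>. x \<in> V}"
    have cC: "countable \<C>" using cB unfolding \<C>_def by simp
    have "\<exists>V\<in>\<B>. x \<in> V \<and> V \<subseteq> topspace Y" using bB[rule_format, of "topspace Y"] xt by simp
    then have neC: "\<C> \<noteq> {}" unfolding \<C>_def by blast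
    define b where "b = from_nat_into \<C>"
    have bC: "b n \<in> \<C>" for n unfolding b_def using neC by (rule from_nat_into)
    have bsurj: "\<exists>m. b m = V" if "V \<in> \<C>" for V unfolding b_def using from_nat_into_surj[OF cC that] .
    define U where "U n = \<Inter> (b ` {..n})" for n
    have oU: "openin Y (U n)" for n
      unfolding U_def by (rule openin_Inter) (use bC oB in \<open>auto simp: \<C>_def\<close>)
    have xU: "x \<in> U n" for n using bC unfolding U_def \<C>_def by auto
    have ex: "\<forall>n. \<exists>g. nontrivial_loop Y x g \<and> g ` {0..1} \<subseteq> U n"
      using x oU xU unfolding w_set_def by blast
    obtain \<alpha> where a': "\<forall>n. nontrivial_loop Y x (\<alpha> n) \<and> \<alpha> n ` {0..1} \<subseteq> U n"
      using choice[OF ex] by blast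
    have a: "nontrivial_loop Y x (\<alpha> n) \<and> \<alpha> n ` {0..1} \<subseteq> U n" for n using a' by blast
    have "null_sequence Y x \<alpha>"
      unfolding null_sequence_def
    proof (intro conjI allI impI)
      show "loop_at Y x (\<alpha> n)" for n using a[of n] by (simp add: nontrivial_loop_def)
      fix V assume V: "openin Y V \<and> x \<in> V"
      then obtain B where B: "B \<in> \<B>" "x \<in> B" "B \<subseteq> V" using bB by blast
      then obtain m where m: "b m = B" using bsurj unfolding \<C>_def by blast
      have "\<alpha> n ` {0..1} \<subseteq> V" if "n \<ge> m" for n
      proof -
        have "U n \<subseteq> b m" unfolding U_def using that by auto
        then show ?thesis using a[of n] m B by blast
      qed
      then show "\<forall>\<^sub>F n in sequentially. \<alpha> n ` {0..1} \<subseteq> V"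
        unfolding eventually_sequentially by blast
    qed
    then show "x \<in> aw_set Y" using a xt unfolding aw_set_def by blast
  qed
qed

theorem mainTheorem7:
  fixes X :: "'a topology"
  assumes "\<not> (subtopology X (w_set X) homotopy_equivalent_space subtopology X (aw_set X))"
  shows "\<forall>Y :: 'b topology. first_countable Y \<longrightarrow> \<not> (X homotopy_equivalent_space Y)"
proof (intro allI impI notI)
  fix Y :: "'b topology"
  assume fc: "first_countable Y" and he: "X homotopy_equivalent_space Y"
  then obtain f g where f: "continuous_map X Y f" and g: "continuous_map Y X g"
    and hom1: "homotopic_with (\<lambda>x. True) X X (g \<circ> f) id"
    and hom2: "homotopic_with (\<lambda>x. True) Y Y (f \<circ> g) id"
    unfolding homotopy_equivalent_space_def by blast
  have e1: "subtopology X (w_set X) homotopy_equivalent_space subtopology Y (w_set Y)"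
    by (rule restrict_he[OF f g hom1 hom2 _ _ w_pres w_pres])
       (use w_map[OF f g hom1] w_map[OF g f hom2] in auto)
  have e2: "subtopology X (aw_set X) homotopy_equivalent_space subtopology Y (aw_set Y)"
    by (rule restrict_he[OF f g hom1 hom2 _ _ aw_pres aw_pres])
       (use aw_map[OF f g hom1] aw_map[OF g f hom2] in auto)
  have "subtopology X (w_set X) homotopy_equivalent_space subtopology X (aw_set X)"
    using homotopy_eqv_trans[OF e1[unfolded fc_w_aw[OF fc]] e2[unfolded homotopy_equivalent_space_sym[of "subtopology X (aw_set X)"]]] .
  with assms show False by contradiction
qed

end
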